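(* If a UE-space $X$ has a $\sigma$-disjoint base, then $X$ has a $\sigma$-strongly point-finite base consisting of cozero-sets.
   Context: "Space" means topological $T_0$-space. A zero-set (cozero-set) of $X$ is $f^{-1}(0)$ (resp. its complement) for continuous $f:X\to[0,1]$. A U-representation of $V\subseteq X$ is a sequence $(U_n(V))_{n\in\mathbb{N}}$ with $V=\bigcup_n U_n(V)$, $U_n(V)\subseteq U_{n+1}(V)$, $U_{2n-1}(V)$ a zero-set, $U_{2n}(V)$ a cozero-set. A family $\alpha$ is an almost subbase of $X$ if U-representations of its members can be chosen so that $\alpha\cup\{X\setminus U_{2n-1}(V):V\in\alpha,n\in\mathbb{N}\}$ is a subbase of $X$. A family is boundedly point-finite if there is an integer $n$ such that any $n+2$ of its members have empty intersection; it is strongly point-finite if every countably infinite subfamily contains a finite subfamily with empty intersection. $\sigma$-P means a countable union of families with property P. A UE-space is a space with a $\sigma$-boundedly point-finite almost subbase. *)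

theory Defs
  imports "HOL-Analysis.Analysis"
begin

definition zero_set :: "'a topology \<Rightarrow> 'a set \<Rightarrow> bool" where
  "zero_set X Z \<longleftrightarrow> (\<exists>f. continuous_map X (top_of_set {0..1::real}) f \<and>
                            Z = {x \<in> topspace X. f x = 0})"

definition cozero_set :: "'a topology \<Rightarrow> 'a set \<Rightarrow> bool" where
  "cozero_set X C \<longleftrightarrow> (\<exists>f. continuous_map X (top_of_set {0..1::real}) f \<and>
                            C = topspace X - {x \<in> topspace X. f x = 0})"

definition U_representation :: "'a topology \<Rightarrow> 'a set \<Rightarrow> (nat \<Rightarrow> 'a set) \<Rightarrow> bool" where
  "U_representation X V U \<longleftrightarrow>
     V = (\<Union>n\<in>{1..}. U n) \<and>
     (\<forall>n\<ge>1. U n \<subseteq> U (Suc n)) \<and>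
     (\<forall>n\<ge>1. zero_set X (U (2*n - 1)) \<and> cozero_set X (U (2*n)))"

definition is_base :: "'a topology \<Rightarrow> 'a set set \<Rightarrow> bool" where
  "is_base X \<B> \<longleftrightarrow> (\<forall>V\<in>\<B>. openin X V) \<and>
     (\<forall>U x. openin X U \<and> x \<in> U \<longrightarrow> (\<exists>V\<in>\<B>. x \<in> V \<and> V \<subseteq> U))"

text \<open>Subbase: finite intersections (empty intersection = whole space) form a base.\<close>
definition is_subbase :: "'a topology \<Rightarrow> 'a set set \<Rightarrow> bool" where
  "is_subbase X \<S> \<longleftrightarrow>
     openin X = arbitrary union_of (finite intersection_of (\<lambda>U. U \<in> \<S>) relative_to topspace X)"

definition almost_subbase :: "'a topology \<Rightarrow> 'a set set \<Rightarrow> bool" where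
  "almost_subbase X \<alpha> \<longleftrightarrow>
     (\<exists>U :: 'a set \<Rightarrow> nat \<Rightarrow> 'a set.
        (\<forall>V\<in>\<alpha>. U_representation X V (U V)) \<and>
        is_subbase X (\<alpha> \<union> {topspace X - U V (2*n - 1) | V n. V \<in> \<alpha> \<and> n \<ge> 1}))"

definition boundedly_point_finite :: "'a set set \<Rightarrow> bool" where
  "boundedly_point_finite \<alpha> \<longleftrightarrow>
     (\<exists>n::nat. \<forall>\<F>. \<F> \<subseteq> \<alpha> \<and> finite \<F> \<and> card \<F> = n + 2 \<longrightarrow> \<Inter>\<F> = {})"

definition strongly_point_finite :: "'a set set \<Rightarrow> bool" where
  "strongly_point_finite \<alpha> \<longleftrightarrow>
     (\<forall>\<beta>. \<beta> \<subseteq> \<alpha> \<and> countable \<beta> \<and> infinite \<beta> \<longrightarrow>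
        (\<exists>\<gamma>. \<gamma> \<subseteq> \<beta> \<and> finite \<gamma> \<and> \<gamma> \<noteq> {} \<and> \<Inter>\<gamma> = {}))"

definition sigma_prop :: "('a set set \<Rightarrow> bool) \<Rightarrow> 'a set set \<Rightarrow> bool" where
  "sigma_prop P \<alpha> \<longleftrightarrow> (\<exists>A :: nat \<Rightarrow> 'a set set. \<alpha> = (\<Union>n. A n) \<and> (\<forall>n. P (A n)))"

definition UE_space :: "'a topology \<Rightarrow> bool" where
  "UE_space X \<longleftrightarrow> t0_space X \<and>
     (\<exists>\<alpha>. almost_subbase X \<alpha> \<and> sigma_prop boundedly_point_finite \<alpha>)"

end

theory Submission
  imports Defs
begin

lemma cozero_topspace: "cozero_set X (topspace X)"
  unfolding cozero_set_def
  by (rule exI[of _ "\<lambda>_. 1"]) (simp add: continuous_map_const)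

lemma cozero_imp_cont:
  assumes "continuous_map X (top_of_set {0..1::real}) f"
  shows "continuous_map X euclideanreal f" "\<And>x. x \<in> topspace X \<Longrightarrow> f x \<in> {0..1}"
  using assms unfolding continuous_map_in_subtopology by (simp_all add: Pi_iff)

lemma cozero_Int:
  assumes "cozero_set X A" "cozero_set X B"
  shows "cozero_set X (A \<inter> B)"
proof -
  obtain f where f: "continuous_map X (top_of_set {0..1::real}) f"
    and A: "A = topspace X - {x \<in> topspace X. f x = 0}"
    using assms(1) unfolding cozero_set_def by blast
  obtain g where g: "continuous_map X (top_of_set {0..1::real}) g"
    and B: "B = topspace X - {x \<in> topspace X. g x = 0}"
    using assms(2) unfolding cozero_set_def by blast
  have c: "continuous_map X euclideanreal (\<lambda>x. f x * g x)"
    by (rule continuous_map_real_mult[OF cozero_imp_cont(1)[OF f] cozero_imp_cont(1)[OF g]])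
  have r: "(\<lambda>x. f x * g x) \<in> topspace X \<rightarrow> {0..1}"
  proof
    fix x assume x: "x \<in> topspace X"
    have "f x \<in> {0..1}" by (rule cozero_imp_cont(2)[OF f x])
    moreover have "g x \<in> {0..1}" by (rule cozero_imp_cont(2)[OF g x])
    ultimately show "f x * g x \<in> {0..1}" by (simp add: mult_le_one)
  qed
  have "A \<inter> B = topspace X - {x \<in> topspace X. f x * g x = 0}"
    unfolding A B by auto
  moreover have "continuous_map X (top_of_set {0..1::real}) (\<lambda>x. f x * g x)"
    using c r by (simp add: continuous_map_in_subtopology)
  ultimately show ?thesis unfolding cozero_set_def by blast
qed

lemma cozero_open:
  assumes "cozero_set X C" shows "openin X C"
proof -
  obtain f where f: "continuous_map X (top_of_set {0..1::real}) f"
    and C: "C = topspace X - {x \<in> topspace X. f x = 0}"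
    using assms unfolding cozero_set_def by blast
  have "openin X {x \<in> topspace X. f x \<in> -{0}}"
    by (rule openin_continuous_map_preimage[OF cozero_imp_cont(1)[OF f]]) (simp add: open_Compl)
  moreover have "C = {x \<in> topspace X. f x \<in> -{0}}" unfolding C by blast
  ultimately show ?thesis by simp
qed

lemma zero_compl_cozero:
  assumes "zero_set X Z" shows "cozero_set X (topspace X - Z)"
  using assms unfolding zero_set_def cozero_set_def by blast

lemma cozero_sub_top: "cozero_set X C \<Longrightarrow> C \<subseteq> topspace X"
  unfolding cozero_set_def by blast

lemma zero_sub_top: "zero_set X C \<Longrightarrow> C \<subseteq> topspace X"
  unfolding zero_set_def by blast

lemma cozero_Inter:
  assumes "finite \<C>" "\<And>C. C \<in> \<C> \<Longrightarrow> cozero_set X C"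
  shows "cozero_set X (topspace X \<inter> \<Inter>\<C>)"
  using assms
proof (induction \<C> rule: finite_induct)
  case empty then show ?case using cozero_topspace by simp
next
  case (insert C \<C>)
  have "topspace X \<inter> \<Inter>(insert C \<C>) = C \<inter> (topspace X \<inter> \<Inter>\<C>)"
    using cozero_sub_top[OF insert.prems[of C]] by blast
  moreover have "cozero_set X (C \<inter> (topspace X \<inter> \<Inter>\<C>))"
    apply (rule cozero_Int) using insert.IH insert.prems by auto
  ultimately show ?case by simp
qed

lemma spf_union_disjoint:
  assumes D: "disjoint \<D>" and F: "\<And>B. B \<in> \<D> \<Longrightarrow> strongly_point_finite (F B)"
    and sub: "\<And>B N. B \<in> \<D> \<Longrightarrow> N \<in> F B \<Longrightarrow> N \<subseteq> B"
  shows "strongly_point_finite (\<Union>B\<in>\<D>. F B)"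
  unfolding strongly_point_finite_def
proof (intro allI impI)
  fix \<beta> assume b: "\<beta> \<subseteq> (\<Union>B\<in>\<D>. F B) \<and> countable \<beta> \<and> infinite \<beta>"
  show "\<exists>\<gamma>\<subseteq>\<beta>. finite \<gamma> \<and> \<gamma> \<noteq> {} \<and> \<Inter>\<gamma> = {}"
  proof (rule ccontr)
    assume H: "\<not> ?thesis"
    from b have "\<beta> \<noteq> {}" by auto
    then obtain N0 where N0: "N0 \<in> \<beta>" by blast
    then obtain B0 where B0: "B0 \<in> \<D>" "N0 \<in> F B0" using b by blast
    have "\<beta> \<subseteq> F B0"
    proof
      fix N assume N: "N \<in> \<beta>"
      then obtain B where B: "B \<in> \<D>" "N \<in> F B" using b by blast
      show "N \<in> F B0"
      proof (cases "B = B0")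
        case True then show ?thesis using B by simp
      next
        case False
        then have "B \<inter> B0 = {}" using D B(1) B0(1) unfolding disjoint_def by blast
        then have "\<Inter>{N, N0} = {}" using sub[OF B] sub[OF B0] by auto
        moreover have "{N, N0} \<subseteq> \<beta>" "finite {N, N0}" "{N, N0} \<noteq> {}" using N N0 by auto
        ultimately have False using H by blast
        then show ?thesis ..
      qed
    qed
    then show False using F[OF B0(1)] b H unfolding strongly_point_finite_def by blast
  qed
qed

lemma finite_bound_exists:
  assumes "finite F" "\<And>s. s \<in> F \<Longrightarrow> \<exists>k::nat. P s k"
  shows "\<exists>K. \<forall>s\<in>F. \<exists>k\<le>K. P s k"
  using assms
proof (induction F rule: finite_induct)
  case empty then show ?case by simp
next
  case (insert a F)
  then obtain K where K: "\<forall>s\<in>F. \<exists>k\<le>K. P s k" by blast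
  obtain k where k: "P a k" using insert.prems by blast
  show ?case
  proof (rule exI[of _ "max K k"], intro ballI)
    fix s assume "s \<in> insert a F"
    then show "\<exists>k'\<le>max K k. P s k'"
    proof
      assume "s = a" then show ?thesis using k by (intro exI[of _ k]) auto
    next
      assume "s \<in> F" then obtain k' where "k' \<le> K" "P s k'" using K by blast
      then show ?thesis by (intro exI[of _ k']) auto
    qed
  qed
qed


locale UEs =
  fixes X :: "'a topology" and U :: "'a set \<Rightarrow> nat \<Rightarrow> 'a set" and A :: "nat \<Rightarrow> 'a set set"
  assumes rep: "\<And>V k. V \<in> A k \<Longrightarrow> U_representation X V (U V)"
    and sub: "is_subbase X ((\<Union>k. A k) \<union> {topspace X - U V (2*n - 1) | V n. V \<in> (\<Union>k. A k) \<and> n \<ge> 1})"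
    and bpf: "\<And>k. boundedly_point_finite (A k)"
begin

definition aK :: "nat \<Rightarrow> 'a set set" where "aK K = (\<Union>k\<in>{..K}. A k)"
definition lev :: "'a set \<Rightarrow> 'a \<Rightarrow> nat" where "lev V x = (LEAST n. n \<ge> 1 \<and> x \<in> U V n)"
definition sig :: "nat \<Rightarrow> 'a \<Rightarrow> ('a set \<times> nat) set" where
  "sig K x = (\<lambda>V. (V, lev V x)) ` {V \<in> aK K. x \<in> V}"
definition hh :: "nat \<Rightarrow> nat" where "hh m = (m+1) div 2"
definition Pset :: "'a set \<Rightarrow> nat \<Rightarrow> 'a set" where
  "Pset V m = U V (2 * hh m) \<inter> (if hh m \<ge> 2 then topspace X - U V (2 * hh m - 3) else topspace X)"
definition Good :: "'a set \<Rightarrow> nat \<Rightarrow> ('a set \<times> nat) set \<Rightarrow> 'a set \<Rightarrow> bool" where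
  "Good B K s N \<longleftrightarrow> N \<subseteq> B \<and> cozero_set X N \<and> (\<forall>p\<in>s. N \<subseteq> Pset (fst p) (snd p)) \<and>
     (\<forall>y\<in>topspace X. sig K y = s \<longrightarrow> y \<in> N)"
definition Nsel :: "'a set \<Rightarrow> nat \<Rightarrow> ('a set \<times> nat) set \<Rightarrow> 'a set" where
  "Nsel B K s = (SOME N. Good B K s N)"
definition Fam :: "'a set \<Rightarrow> nat \<Rightarrow> 'a set set" where
  "Fam B K = {Nsel B K (sig K x) | x. x \<in> B \<and> (\<exists>N. Good B K (sig K x) N)}"

lemma aK_rep: "V \<in> aK K \<Longrightarrow> U_representation X V (U V)"
  unfolding aK_def using rep by blast

lemma U_step: "U_representation X V (U V) \<Longrightarrow> n \<ge> 1 \<Longrightarrow> U V n \<subseteq> U V (Suc n)"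
  unfolding U_representation_def by blast

lemma U_mono:
  assumes r: "U_representation X V (U V)" and "1 \<le> a" "a \<le> b"
  shows "U V a \<subseteq> U V b"
  using assms(3)
proof (induction b rule: dec_induct)
  case base then show ?case by simp
next
  case (step n)
  then show ?case using U_step[OF r, of n] assms(2) by auto
qed

lemma U_sub: "U_representation X V (U V) \<Longrightarrow> n \<ge> 1 \<Longrightarrow> U V n \<subseteq> V"
  unfolding U_representation_def by auto

lemma U_cozero: "U_representation X V (U V) \<Longrightarrow> n \<ge> 1 \<Longrightarrow> cozero_set X (U V (2*n))"
  unfolding U_representation_def by blast

lemma U_zero: "U_representation X V (U V) \<Longrightarrow> n \<ge> 1 \<Longrightarrow> zero_set X (U V (2*n - 1))"
  unfolding U_representation_def by blast

lemma mem_V: "U_representation X V (U V) \<Longrightarrow> x \<in> V \<Longrightarrow> \<exists>n\<ge>1. x \<in> U V n"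
  unfolding U_representation_def by auto

lemma lev_props:
  assumes "U_representation X V (U V)" "x \<in> V"
  shows "lev V x \<ge> 1" "x \<in> U V (lev V x)"
proof -
  obtain n where "n \<ge> 1" "x \<in> U V n" using mem_V[OF assms] by blast
  then have "lev V x \<ge> 1 \<and> x \<in> U V (lev V x)"
    unfolding lev_def by (rule LeastI[where P = "\<lambda>n. n \<ge> 1 \<and> x \<in> U V n", OF conjI])
  then show "lev V x \<ge> 1" "x \<in> U V (lev V x)" by auto
qed

lemma lev_le: "n \<ge> 1 \<Longrightarrow> x \<in> U V n \<Longrightarrow> lev V x \<le> n"
  unfolding lev_def by (rule Least_le) simp

lemma mem_iff:
  assumes r: "U_representation X V (U V)" and n: "n \<ge> 1"
  shows "x \<in> U V n \<longleftrightarrow> x \<in> V \<and> lev V x \<le> n"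
proof
  assume "x \<in> U V n"
  then show "x \<in> V \<and> lev V x \<le> n" using U_sub[OF r n] lev_le[OF n] by auto
next
  assume "x \<in> V \<and> lev V x \<le> n"
  then show "x \<in> U V n" using lev_props[OF r] U_mono[OF r] by blast
qed

lemma hh_ge1: "m \<ge> 1 \<Longrightarrow> hh m \<ge> 1"
  unfolding hh_def by simp

lemma Pset_cozero:
  assumes r: "U_representation X V (U V)" and m: "m \<ge> 1"
  shows "cozero_set X (Pset V m)"
proof -
  have h: "hh m \<ge> 1" using hh_ge1[OF m] .
  have c1: "cozero_set X (U V (2 * hh m))" using U_cozero[OF r h] .
  show ?thesis
  proof (cases "hh m \<ge> 2")
    case True
    have e: "2 * hh m - 3 = 2 * (hh m - 1) - 1" using True by simp
    have "cozero_set X (topspace X - U V (2 * hh m - 3))"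
      unfolding e by (rule zero_compl_cozero[OF U_zero[OF r]]) (use True in simp)
    then show ?thesis unfolding Pset_def using True c1 cozero_Int by simp
  next
    case False
    then show ?thesis unfolding Pset_def using c1 cozero_sub_top[OF c1] by (simp add: Int_absorb2)
  qed
qed

lemma Pset_sub:
  assumes r: "U_representation X V (U V)" and m: "m \<ge> 1"
  shows "Pset V m \<subseteq> V"
  unfolding Pset_def using U_sub[OF r, of "2 * hh m"] hh_ge1[OF m] by auto

lemma Pset_mem:
  assumes r: "U_representation X V (U V)" and x: "x \<in> V" "x \<in> topspace X"
  shows "x \<in> Pset V (lev V x)"
proof -
  let ?m = "lev V x"
  have m: "?m \<ge> 1" using lev_props[OF r x(1)] by simp
  have "?m \<le> 2 * hh ?m" unfolding hh_def by simp
  then have a: "x \<in> U V (2 * hh ?m)" using mem_iff[OF r, of "2 * hh ?m" x] x m by simp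
  have b: "x \<notin> U V (2 * hh ?m - 3)" if "hh ?m \<ge> 2"
  proof -
    have "2 * hh ?m - 3 < ?m" "2 * hh ?m - 3 \<ge> 1" using that unfolding hh_def by auto
    then show ?thesis using mem_iff[OF r, of "2 * hh ?m - 3" x] by simp
  qed
  show ?thesis unfolding Pset_def using a b x by auto
qed

lemma Pset_close:
  assumes r: "U_representation X V (U V)" and m0: "m0 \<ge> 1"
    and y: "y \<in> Pset V m0" "y \<in> Pset V m"
  shows "m \<le> m0 + 3"
proof (rule ccontr)
  assume "\<not> m \<le> m0 + 3"
  then have h: "hh m \<ge> hh m0 + 2" "hh m \<ge> 2" unfolding hh_def by auto
  have "y \<in> U V (2 * hh m0)" using y(1) unfolding Pset_def by auto
  moreover have "U V (2 * hh m0) \<subseteq> U V (2 * hh m - 3)"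
    by (rule U_mono[OF r]) (use hh_ge1[OF m0] h in auto)
  moreover have "y \<notin> U V (2 * hh m - 3)" using y(2) h unfolding Pset_def by auto
  ultimately show False by blast
qed


lemma sig_same:
  assumes e: "sig K x = sig K y" and V: "V \<in> aK K" and n: "n \<ge> 1"
  shows "x \<in> U V n \<longleftrightarrow> y \<in> U V n"
proof -
  have r: "U_representation X V (U V)" using aK_rep[OF V] .
  have one: "z' \<in> V \<and> lev V z' = lev V z" if "sig K z = sig K z'" "z \<in> V" for z z'
  proof -
    have "(V, lev V z) \<in> sig K z" using V that(2) unfolding sig_def by auto
    then have "(V, lev V z) \<in> sig K z'" using that(1) by simp
    then show ?thesis unfolding sig_def by auto
  qed
  show ?thesis
  proof (cases "x \<in> V")
    case True
    then have "y \<in> V" "lev V y = lev V x" using one[OF e] by auto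
    then show ?thesis using mem_iff[OF r n] True by auto
  next
    case False
    then have "y \<notin> V" using one[OF e[symmetric]] by auto
    then show ?thesis using mem_iff[OF r n] False by auto
  qed
qed

lemma bpf_fin: "finite {V \<in> A k. x \<in> V}"
proof (rule ccontr)
  assume inf: "infinite {V \<in> A k. x \<in> V}"
  obtain c where c: "\<forall>F. F \<subseteq> A k \<and> finite F \<and> card F = c + 2 \<longrightarrow> \<Inter>F = {}"
    using bpf[of k] unfolding boundedly_point_finite_def by blast
  obtain G where G: "finite G" "card G = c + 2" "G \<subseteq> {V \<in> A k. x \<in> V}"
    using infinite_arbitrarily_large[OF inf] by blast
  then have "\<Inter>G = {}" using c by blast
  moreover have "x \<in> \<Inter>G" using G(3) by blast
  ultimately show False by simp
qed

lemma supp_fin: "finite {V \<in> aK K. x \<in> V}"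
proof -
  have "{V \<in> aK K. x \<in> V} = (\<Union>k\<in>{..K}. {V \<in> A k. x \<in> V})" unfolding aK_def by blast
  then show ?thesis using bpf_fin by simp
qed

lemma sig_fin: "finite (sig K x)"
  unfolding sig_def using supp_fin by simp

lemma Pset_transfer:
  assumes e: "sig K x = sig K y" and y: "y \<in> topspace X" and V: "V \<in> aK K" and m: "m \<ge> 1"
    and x: "x \<in> Pset V m"
  shows "y \<in> Pset V m"
proof -
  have h: "hh m \<ge> 1" using hh_ge1[OF m] .
  have a: "y \<in> U V (2 * hh m)" using x sig_same[OF e V, of "2 * hh m"] h unfolding Pset_def by auto
  have b: "y \<notin> U V (2 * hh m - 3)" if "hh m \<ge> 2"
    using x sig_same[OF e V, of "2 * hh m - 3"] that unfolding Pset_def by auto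
  show ?thesis unfolding Pset_def using a b y by auto
qed

lemma exists_good:
  assumes B: "openin X B" and x: "x \<in> B"
  shows "\<exists>K N. Good B K (sig K x) N"
proof -
  define S where "S = (\<Union>k. A k) \<union> {topspace X - U V (2*n - 1) | V n. V \<in> (\<Union>k. A k) \<and> n \<ge> 1}"
  have xt: "x \<in> topspace X" using openin_subset[OF B] x by blast
  have "(arbitrary union_of (finite intersection_of (\<lambda>U. U \<in> S) relative_to topspace X)) B"
    using sub B unfolding is_subbase_def S_def by simp
  then obtain \<U> where U1: "\<U> \<subseteq> {W. (finite intersection_of (\<lambda>U. U \<in> S) relative_to topspace X) W}"
    and U2: "\<Union>\<U> = B"
    unfolding union_of_def by auto
  obtain W where W: "W \<in> \<U>" "x \<in> W" using U2 x by blast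
  then obtain W' where W': "(finite intersection_of (\<lambda>U. U \<in> S)) W'" "topspace X \<inter> W' = W"
    using U1 unfolding relative_to_def by blast
  then obtain F where F: "finite F" "F \<subseteq> S" "\<Inter>F = W'"
    unfolding intersection_of_def by auto
  have xF: "x \<in> s" if "s \<in> F" for s using W W' F that by blast
  define P where "P s k \<longleftrightarrow> (\<exists>V\<in>A k. s = V \<or> (\<exists>n\<ge>1. s = topspace X - U V (2*n - 1)))" for s k
  have "\<exists>k. P s k" if "s \<in> F" for s
    using F(2) that unfolding S_def P_def by blast
  then obtain K where K: "\<forall>s\<in>F. \<exists>k\<le>K. P s k" using finite_bound_exists[OF F(1)] by blast
  have ex: "\<forall>s\<in>F. \<exists>C. x \<in> C \<and> C \<subseteq> s \<and> cozero_set X C \<and> (\<forall>y\<in>topspace X. sig K y = sig K x \<longrightarrow> y \<in> C)"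
  proof
    fix s assume s: "s \<in> F"
    show "\<exists>C. x \<in> C \<and> C \<subseteq> s \<and> cozero_set X C \<and> (\<forall>y\<in>topspace X. sig K y = sig K x \<longrightarrow> y \<in> C)"
    proof -
    obtain k V where kV: "k \<le> K" "V \<in> A k" "s = V \<or> (\<exists>n\<ge>1. s = topspace X - U V (2*n - 1))"
      using K s unfolding P_def by blast
    have VK: "V \<in> aK K" using kV unfolding aK_def by auto
    have r: "U_representation X V (U V)" using rep[OF kV(2)] .
    show ?thesis
    proof (cases "s = V")
      case True
      then have "x \<in> V" using xF[OF s] by simp
      then obtain n where n: "n \<ge> 1" "x \<in> U V n" using mem_V[OF r] by blast
      have "x \<in> U V (2*n)" using U_mono[OF r n(1), of "2*n"] n by auto
      moreover have "U V (2*n) \<subseteq> s" using U_sub[OF r, of "2*n"] n True by simp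
      moreover have "cozero_set X (U V (2*n))" using U_cozero[OF r n(1)] .
      moreover have "\<forall>y\<in>topspace X. sig K y = sig K x \<longrightarrow> y \<in> U V (2*n)"
      proof (intro ballI impI)
        fix y assume "y \<in> topspace X" "sig K y = sig K x"
        then show "y \<in> U V (2*n)" using sig_same[OF _ VK, of x y "2*n"] calculation(1) n(1) by simp
      qed
      ultimately show ?thesis by (intro exI[of _ "U V (2*n)"]) simp
    next
      case False
      then obtain n where n: "n \<ge> 1" "s = topspace X - U V (2*n - 1)" using kV by blast
      have "cozero_set X s" unfolding n(2) by (rule zero_compl_cozero[OF U_zero[OF r n(1)]])
      moreover have "\<forall>y\<in>topspace X. sig K y = sig K x \<longrightarrow> y \<in> s"
      proof (intro ballI impI)
        fix y assume "y \<in> topspace X" "sig K y = sig K x"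
        then show "y \<in> s" using sig_same[OF _ VK, of x y "2*n - 1"] xF[OF s] n by auto
      qed
      ultimately show ?thesis using xF[OF s] by (intro exI[of _ s]) simp
    qed
    qed
  qed
  obtain Cf where Cf: "\<forall>s\<in>F. x \<in> Cf s \<and> Cf s \<subseteq> s \<and> cozero_set X (Cf s) \<and>
      (\<forall>y\<in>topspace X. sig K y = sig K x \<longrightarrow> y \<in> Cf s)"
    using bchoice[OF ex] by blast
  define N where "N = topspace X \<inter> \<Inter>(Cf ` F \<union> (\<lambda>p. Pset (fst p) (snd p)) ` sig K x)"
  have "N \<subseteq> B"
  proof
    fix z assume z: "z \<in> N"
    then have "z \<in> s" if "s \<in> F" for s using Cf that unfolding N_def by blast
    then have "z \<in> W'" using F(3) by blast
    moreover have "z \<in> topspace X" using z unfolding N_def by blast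
    ultimately show "z \<in> B" using W W' U2 by blast
  qed
  moreover have "cozero_set X N" unfolding N_def
  proof (rule cozero_Inter)
    show "finite (Cf ` F \<union> (\<lambda>p. Pset (fst p) (snd p)) ` sig K x)" using F(1) sig_fin by simp
  next
    fix C assume "C \<in> Cf ` F \<union> (\<lambda>p. Pset (fst p) (snd p)) ` sig K x"
    then show "cozero_set X C"
    proof
      assume "C \<in> Cf ` F" then show ?thesis using Cf by blast
    next
      assume "C \<in> (\<lambda>p. Pset (fst p) (snd p)) ` sig K x"
      then obtain V where V: "V \<in> aK K" "x \<in> V" "C = Pset V (lev V x)" unfolding sig_def by auto
      show ?thesis unfolding V(3) using Pset_cozero[OF aK_rep[OF V(1)] lev_props(1)[OF aK_rep[OF V(1)] V(2)]] .
    qed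
  qed
  moreover have "\<forall>p\<in>sig K x. N \<subseteq> Pset (fst p) (snd p)" unfolding N_def by blast
  moreover have "\<forall>y\<in>topspace X. sig K y = sig K x \<longrightarrow> y \<in> N"
  proof (intro ballI impI)
    fix y assume y: "y \<in> topspace X" "sig K y = sig K x"
    have "y \<in> Pset V (lev V x)" if V: "V \<in> aK K" "x \<in> V" for V
      using Pset_transfer[OF y(2)[symmetric] y(1) V(1) lev_props(1)[OF aK_rep[OF V(1)] V(2)]
          Pset_mem[OF aK_rep[OF V(1)] V(2) xt]] .
    then show "y \<in> N" using Cf y unfolding N_def sig_def by auto
  qed
  ultimately show ?thesis unfolding Good_def by blast
qed

lemma Good_Nsel: "Good B K s N \<Longrightarrow> Good B K s (Nsel B K s)"
  unfolding Nsel_def by (rule someI)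

lemma Fam_good:
  assumes "N \<in> Fam B K" shows "N \<subseteq> B \<and> cozero_set X N"
proof -
  obtain x N' where x: "N = Nsel B K (sig K x)" "Good B K (sig K x) N'"
    using assms unfolding Fam_def by blast
  have "Good B K (sig K x) N" unfolding x(1) by (rule Good_Nsel[OF x(2)])
  then show ?thesis unfolding Good_def by blast
qed

lemma spf_Fam: "strongly_point_finite (Fam B K)"
  unfolding strongly_point_finite_def
proof (intro allI impI)
  fix \<beta> assume b: "\<beta> \<subseteq> Fam B K \<and> countable \<beta> \<and> infinite \<beta>"
  show "\<exists>\<gamma>\<subseteq>\<beta>. finite \<gamma> \<and> \<gamma> \<noteq> {} \<and> \<Inter>\<gamma> = {}"
  proof (rule ccontr)
    assume H: "\<not> ?thesis"
    have H': "\<Inter>\<gamma> \<noteq> {}" if "\<gamma> \<subseteq> \<beta>" "finite \<gamma>" "\<gamma> \<noteq> {}" for \<gamma> using H that by blast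
    define Z where "Z = {x \<in> B. (\<exists>N. Good B K (sig K x) N) \<and> Nsel B K (sig K x) \<in> \<beta>}"
    have beq: "\<beta> = (\<lambda>x. Nsel B K (sig K x)) ` Z"
    proof
      show "\<beta> \<subseteq> (\<lambda>x. Nsel B K (sig K x)) ` Z"
      proof
        fix N assume N: "N \<in> \<beta>"
        then have "N \<in> Fam B K" using b by blast
        then obtain x where "x \<in> B" "\<exists>N. Good B K (sig K x) N" "N = Nsel B K (sig K x)"
          unfolding Fam_def by blast
        then show "N \<in> (\<lambda>x. Nsel B K (sig K x)) ` Z" using N unfolding Z_def by blast
      qed
    next
      show "(\<lambda>x. Nsel B K (sig K x)) ` Z \<subseteq> \<beta>" unfolding Z_def by blast
    qed
    have GZ: "Good B K (sig K x) (Nsel B K (sig K x))" if xz: "x \<in> Z" for x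
    proof -
      obtain N where "Good B K (sig K x) N" using xz unfolding Z_def by blast
      then show ?thesis by (rule Good_Nsel)
    qed
    have inP: "Nsel B K (sig K x) \<subseteq> Pset V (lev V x)" if "x \<in> Z" "V \<in> aK K" "x \<in> V" for x V
    proof -
      have "(V, lev V x) \<in> sig K x" using that(2,3) unfolding sig_def by auto
      moreover have "\<forall>p\<in>sig K x. Nsel B K (sig K x) \<subseteq> Pset (fst p) (snd p)"
        using GZ[OF that(1)] unfolding Good_def by blast
      ultimately show ?thesis by force
    qed
    have inV: "Nsel B K (sig K x) \<subseteq> V" if "x \<in> Z" "V \<in> aK K" "x \<in> V" for x V
      using inP[OF that] Pset_sub[OF aK_rep[OF that(2)] lev_props(1)[OF aK_rep[OF that(2)] that(3)]]
      by blast
    define T where "T = {V \<in> aK K. \<exists>x\<in>Z. x \<in> V}"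
    have Tk: "finite {V \<in> A k. \<exists>x\<in>Z. x \<in> V}" if k: "k \<le> K" for k
    proof (rule ccontr)
      assume inf: "infinite {V \<in> A k. \<exists>x\<in>Z. x \<in> V}"
      obtain c where c: "\<forall>F. F \<subseteq> A k \<and> finite F \<and> card F = c + 2 \<longrightarrow> \<Inter>F = {}"
        using bpf[of k] unfolding boundedly_point_finite_def by blast
      obtain G where G: "finite G" "card G = c + 2" "G \<subseteq> {V \<in> A k. \<exists>x\<in>Z. x \<in> V}"
        using infinite_arbitrarily_large[OF inf] by blast
      have exv: "\<forall>V\<in>G. \<exists>x. x \<in> Z \<and> x \<in> V" using G(3) by blast
      obtain xv where xv: "\<forall>V\<in>G. xv V \<in> Z \<and> xv V \<in> V" using bchoice[OF exv] by blast
      define \<gamma> where "\<gamma> = (\<lambda>V. Nsel B K (sig K (xv V))) ` G"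
      have "G \<noteq> {}" using G(2) by auto
      then have gne: "\<gamma> \<noteq> {}" unfolding \<gamma>_def by simp
      have "\<gamma> \<subseteq> \<beta>" using xv unfolding \<gamma>_def Z_def by auto
      moreover have "finite \<gamma>" using G(1) unfolding \<gamma>_def by simp
      ultimately have "\<Inter>\<gamma> \<noteq> {}" using gne by (rule H')
      then obtain y where y: "y \<in> \<Inter>\<gamma>" by blast
      have GK: "V \<in> aK K" if "V \<in> G" for V using G(3) that k unfolding aK_def by auto
      have "y \<in> V" if "V \<in> G" for V
      proof -
        have "y \<in> Nsel B K (sig K (xv V))" using y that unfolding \<gamma>_def by blast
        then show ?thesis using inV[of "xv V" V] xv that GK[OF that] by blast
      qed
      then have "y \<in> \<Inter>G" by blast
      moreover have "\<Inter>G = {}" using c G by blast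
      ultimately show False by simp
    qed
    have "T \<subseteq> (\<Union>k\<in>{..K}. {V \<in> A k. \<exists>x\<in>Z. x \<in> V})" unfolding T_def aK_def by blast
    then have finT: "finite T" by (rule finite_subset) (use Tk in simp)
    have ex0: "\<forall>V\<in>T. \<exists>x. x \<in> Z \<and> x \<in> V" unfolding T_def by blast
    obtain x0 where x0: "\<forall>V\<in>T. x0 V \<in> Z \<and> x0 V \<in> V" using bchoice[OF ex0] by blast
    define bd where "bd = (\<Sum>V\<in>T. lev V (x0 V) + 3)"
    have lb: "lev V x \<le> bd" if x: "x \<in> Z" "V \<in> aK K" "x \<in> V" for x V
    proof -
      have VT: "V \<in> T" using x unfolding T_def by blast
      have z0: "x0 V \<in> Z" "x0 V \<in> V" using x0 VT by auto
      have "{Nsel B K (sig K (x0 V)), Nsel B K (sig K x)} \<subseteq> \<beta>" using z0(1) x(1) unfolding Z_def by auto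
      moreover have "finite {Nsel B K (sig K (x0 V)), Nsel B K (sig K x)}" by simp
      moreover have "{Nsel B K (sig K (x0 V)), Nsel B K (sig K x)} \<noteq> {}" by simp
      ultimately have "\<Inter>{Nsel B K (sig K (x0 V)), Nsel B K (sig K x)} \<noteq> {}" by (rule H')
      then obtain y where y: "y \<in> \<Inter>{Nsel B K (sig K (x0 V)), Nsel B K (sig K x)}" by blast
      have y1: "y \<in> Pset V (lev V (x0 V))" using y inP[OF z0(1) x(2) z0(2)] by auto
      have y2: "y \<in> Pset V (lev V x)" using y inP[OF x] by auto
      have "lev V x \<le> lev V (x0 V) + 3"
        using Pset_close[OF aK_rep[OF x(2)] lev_props(1)[OF aK_rep[OF x(2)] z0(2)] y1 y2] .
      also have "\<dots> \<le> bd" unfolding bd_def using finT VT by (intro member_le_sum) auto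
      finally show ?thesis .
    qed
    have "sig K ` Z \<subseteq> Pow (T \<times> {..bd})"
    proof
      fix s assume "s \<in> sig K ` Z"
      then obtain x where x: "x \<in> Z" "s = sig K x" by blast
      show "s \<in> Pow (T \<times> {..bd})"
      proof (rule PowI, rule subsetI)
        fix p assume "p \<in> s"
        then obtain V where V: "V \<in> aK K" "x \<in> V" "p = (V, lev V x)" using x unfolding sig_def by auto
        then show "p \<in> T \<times> {..bd}" using lb[OF x(1) V(1,2)] x(1) unfolding T_def by auto
      qed
    qed
    moreover have "finite (Pow (T \<times> {..bd}))" using finT by simp
    ultimately have "finite (sig K ` Z)" by (rule finite_subset)
    moreover have "\<beta> = Nsel B K ` (sig K ` Z)" unfolding beq by (simp add: image_image)
    ultimately have "finite \<beta>" by simp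
    then show False using b by blast
  qed
qed

end


theorem corollary5p11:
  fixes X :: "'a topology"
  assumes "UE_space X"
    and "\<exists>\<B>. is_base X \<B> \<and> sigma_prop disjoint \<B>"
  shows "\<exists>\<B>. is_base X \<B> \<and> (\<forall>V\<in>\<B>. cozero_set X V) \<and>
             sigma_prop strongly_point_finite \<B>"
proof -
  obtain \<alpha> where a1: "almost_subbase X \<alpha>" and a2: "sigma_prop boundedly_point_finite \<alpha>"
    using assms(1) unfolding UE_space_def by blast
  obtain U where U1: "\<forall>V\<in>\<alpha>. U_representation X V (U V)"
    and U2: "is_subbase X (\<alpha> \<union> {topspace X - U V (2*n - 1) | V n. V \<in> \<alpha> \<and> n \<ge> 1})"
    using a1 unfolding almost_subbase_def by blast
  define A where "A = (SOME A. \<alpha> = (\<Union>n::nat. A n) \<and> (\<forall>n. boundedly_point_finite (A n)))"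
  have A12: "\<alpha> = (\<Union>n. A n) \<and> (\<forall>n. boundedly_point_finite (A n))"
  proof -
    have exA: "\<exists>A. \<alpha> = (\<Union>n::nat. A n) \<and> (\<forall>n. boundedly_point_finite (A n))"
      using a2 unfolding sigma_prop_def by blast
    show ?thesis unfolding A_def by (rule someI_ex[OF exA])
  qed
  have A1: "\<alpha> = (\<Union>n. A n)" and A2: "\<forall>n. boundedly_point_finite (A n)" using A12 by auto
  interpret UEs X U A
  proof
    show "U_representation X V (U V)" if "V \<in> A k" for V k using U1 A1 that by blast
    show "is_subbase X ((\<Union>k. A k) \<union> {topspace X - U V (2*n - 1) | V n. V \<in> (\<Union>k. A k) \<and> n \<ge> 1})"
      using U2 unfolding A1 .
    show "boundedly_point_finite (A k)" for k using A2 by blast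
  qed
  define \<B> where "\<B> = (SOME \<B>. is_base X \<B> \<and> sigma_prop disjoint \<B>)"
  have B1: "is_base X \<B> \<and> sigma_prop disjoint \<B>" unfolding \<B>_def by (rule someI_ex[OF assms(2)])
  define D where "D = (SOME D. \<B> = (\<Union>n::nat. D n) \<and> (\<forall>n. disjoint (D n)))"
  have D23: "\<B> = (\<Union>n. D n) \<and> (\<forall>n. disjoint (D n))"
  proof -
    have exD: "\<exists>D. \<B> = (\<Union>n::nat. D n) \<and> (\<forall>n. disjoint (D n))"
      using B1 unfolding sigma_prop_def by blast
    show ?thesis unfolding D_def by (rule someI_ex[OF exD])
  qed
  have D1: "is_base X \<B>" and D2: "\<B> = (\<Union>n. D n)" and D3: "\<forall>n. disjoint (D n)" using B1 D23 by auto
  define Big where "Big j = (\<Union>B\<in>D (fst (prod_decode j)). Fam B (snd (prod_decode j)))" for j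
  define R where "R = (\<Union>j. Big j)"
  have cz: "\<forall>V\<in>R. cozero_set X V" unfolding R_def Big_def using Fam_good by blast
  have "is_base X R"
    unfolding is_base_def
  proof (intro conjI allI impI)
    show "\<forall>V\<in>R. openin X V" using cz cozero_open by blast
  next
    fix Opn x assume Ox: "openin X Opn \<and> x \<in> Opn"
    then obtain V where V: "V \<in> \<B>" "x \<in> V" "V \<subseteq> Opn" using D1 unfolding is_base_def by blast
    then obtain m where m: "V \<in> D m" using D2 by blast
    have oV: "openin X V" using D1 V(1) unfolding is_base_def by blast
    obtain K N where KN: "Good V K (sig K x) N" using exists_good[OF oV V(2)] by blast
    have G: "Good V K (sig K x) (Nsel V K (sig K x))" using Good_Nsel[OF KN] .
    have xt: "x \<in> topspace X" using openin_subset[OF oV] V(2) by blast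
    have mem: "Nsel V K (sig K x) \<in> Fam V K" unfolding Fam_def using V(2) KN by blast
    have "Nsel V K (sig K x) \<in> Big (prod_encode (m, K))"
      unfolding Big_def using m mem by (simp add: prod_encode_inverse) blast
    then have "Nsel V K (sig K x) \<in> R" unfolding R_def by blast
    moreover have "x \<in> Nsel V K (sig K x)" using G xt unfolding Good_def by blast
    moreover have "Nsel V K (sig K x) \<subseteq> Opn" using G V(3) unfolding Good_def by blast
    ultimately show "\<exists>W\<in>R. x \<in> W \<and> W \<subseteq> Opn" by blast
  qed
  moreover have "sigma_prop strongly_point_finite R"
    unfolding sigma_prop_def
  proof (intro exI[of _ Big] conjI allI)
    show "R = (\<Union>j. Big j)" unfolding R_def ..
    fix j show "strongly_point_finite (Big j)"
      unfolding Big_def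
      by (rule spf_union_disjoint[OF D3[rule_format] spf_Fam]) (use Fam_good in blast)
  qed
  ultimately show ?thesis using cz by blast
qed

end
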